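(* Let $c,c':\Delta(S)\to[0,\infty]$ be grounded, convex and lower semi-continuous. The following are equivalent: (a) $c$ is up-shifted from $c'$; (b) for all functions $f,f':S\to\mathbb{R}$ such that $f-f'$ is increasing, \[ \max_{p\in\Delta(S)}\Big[-c'(p)+\sum_{s}f(s)p(s)\Big]\ \ge\ \max_{p\in\Delta(S)}\Big[-c'(p)+\sum_sf'(s)p(s)\Big] \] implies \[ \max_{p\in\Delta(S)}\Big[-c(p)+\sum_{s}f(s)p(s)\Big]\ \ge\ \max_{p\in\Delta(S)}\Big[-c(p)+\sum_sf'(s)p(s)\Big], \] and the same implication holds with both $\ge$ replaced by $>$.
   Context: $S=\{s_1<s_2<\dots<s_{|S|}\}$ is a finite totally ordered set, $\Delta(S)$ its simplex. "Increasing" means weakly increasing with respect to the order on $S$. For $p,q\in\Delta(S)$, "$p$ FOSD $q$" means $\sum_{s\ge t}p(s)\ge\sum_{s\ge t}q(s)$ for all $t\in S$. Grounded means infimum equal to $0$. $c$ is up-shifted from $c'$ iff for any $p,p'\in\Delta(S)$ there exist $q,q'\in\Delta(S)$ such that $p$ FOSD $q'$, $q$ FOSD $p'$, $\tfrac12p+\tfrac12p'=\tfrac12q+\tfrac12q'$, and $c(q)+c'(q')\le c(p)+c'(p')$. *)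

theory Defs
  imports "HOL-Analysis.Analysis" "HOL-Library.Extended_Real"
begin

text \<open>Elements of the prob_simplex Delta(S) are functions p :: 's => real; cost functions
  Delta(S) -> [0,infinity] are functions into ereal (only their values on the prob_simplex matter).\<close>

definition prob_simplex :: "('s::finite \<Rightarrow> real) set" where
  "prob_simplex = {p. (\<forall>s. 0 \<le> p s) \<and> (\<Sum>s\<in>UNIV. p s) = 1}"

definition fosd :: "('s::{finite,linorder} \<Rightarrow> real) \<Rightarrow> ('s \<Rightarrow> real) \<Rightarrow> bool" where
  "fosd p q \<longleftrightarrow> (\<forall>t. (\<Sum>s\<in>{s. s \<ge> t}. p s) \<ge> (\<Sum>s\<in>{s. s \<ge> t}. q s))"

definition nonneg_cost :: "(('s::finite \<Rightarrow> real) \<Rightarrow> ereal) \<Rightarrow> bool" where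
  "nonneg_cost c \<longleftrightarrow> (\<forall>p\<in>prob_simplex. 0 \<le> c p)"

definition grounded :: "(('s::finite \<Rightarrow> real) \<Rightarrow> ereal) \<Rightarrow> bool" where
  "grounded c \<longleftrightarrow> (INF p\<in>prob_simplex. c p) = 0"

definition convex_cost :: "(('s::finite \<Rightarrow> real) \<Rightarrow> ereal) \<Rightarrow> bool" where
  "convex_cost c \<longleftrightarrow> (\<forall>p\<in>prob_simplex. \<forall>q\<in>prob_simplex. \<forall>t::real. 0 \<le> t \<and> t \<le> 1 \<longrightarrow>
     c (\<lambda>s. t * p s + (1 - t) * q s) \<le> ereal t * c p + ereal (1 - t) * c q)"

definition lsc_cost :: "(('s::finite \<Rightarrow> real) \<Rightarrow> ereal) \<Rightarrow> bool" where
  "lsc_cost c \<longleftrightarrow> (\<forall>p\<in>prob_simplex. \<forall>x::nat \<Rightarrow> ('s \<Rightarrow> real).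
     (\<forall>n. x n \<in> prob_simplex) \<and> x \<longlonglongrightarrow> p \<longrightarrow> c p \<le> liminf (\<lambda>n. c (x n)))"

definition up_shifted :: "(('s::{finite,linorder} \<Rightarrow> real) \<Rightarrow> ereal) \<Rightarrow> (('s \<Rightarrow> real) \<Rightarrow> ereal) \<Rightarrow> bool" where
  "up_shifted c c' \<longleftrightarrow> (\<forall>p\<in>prob_simplex. \<forall>p'\<in>prob_simplex. \<exists>q\<in>prob_simplex. \<exists>q'\<in>prob_simplex.
     fosd p q' \<and> fosd q p' \<and>
     (\<lambda>s. (1/2) * p s + (1/2) * p' s) = (\<lambda>s. (1/2) * q s + (1/2) * q' s) \<and>
     c q + c' q' \<le> c p + c' p')"

text \<open>The value max_{p in Delta(S)} [ -c(p) + sum_s f(s) p(s) ] (written as a supremum; it is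
  attained under the standing hypotheses).\<close>
definition val :: "(('s::finite \<Rightarrow> real) \<Rightarrow> ereal) \<Rightarrow> ('s \<Rightarrow> real) \<Rightarrow> ereal" where
  "val c f = (SUP p\<in>prob_simplex. - c p + ereal (\<Sum>s\<in>UNIV. f s * p s))"

end

theory Submission
  imports Defs
begin

lemma abel_aux:
  fixes d g :: "'s::linorder \<Rightarrow> real"
  assumes "finite S"
  shows "mono g \<Longrightarrow> (\<forall>s\<in>S. 0 \<le> g s) \<Longrightarrow> (\<forall>t. 0 \<le> (\<Sum>s\<in>{s\<in>S. t \<le> s}. d s))
     \<Longrightarrow> 0 \<le> (\<Sum>s\<in>S. g s * d s)"
  using assms
proof (induction S arbitrary: g rule: finite_linorder_min_induct)
  case empty
  then show ?case by simp
next
  case (insert b A)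
  have tailA: "0 \<le> (\<Sum>s\<in>{s\<in>A. t \<le> s}. d s)" for t
  proof (cases "b < t")
    case True
    then have "{s\<in>insert b A. t \<le> s} = {s\<in>A. t \<le> s}" by auto
    then show ?thesis using insert.prems(3) by metis
  next
    case False
    then have eq: "{s\<in>A. t \<le> s} = A" using insert.hyps(2) by force
    show ?thesis
    proof (cases "A = {}")
      case True then show ?thesis by simp
    next
      case False
      have mi: "Min A \<in> A" using Min_in insert.hyps(1) False by blast
      then have "b < Min A" using insert.hyps(2) by blast
      then have "{s\<in>insert b A. Min A \<le> s} = A"
        using insert.hyps(1) by (auto intro: Min_le)
      then show ?thesis using insert.prems(3) eq by metis
    qed
  qed
  have "{s\<in>insert b A. b \<le> s} = insert b A" using insert.hyps(2) by auto
  then have tot: "0 \<le> (\<Sum>s\<in>insert b A. d s)" using insert.prems(3) by metis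
  have bnot: "b \<notin> A" using insert.hyps(2) by auto
  have IH: "0 \<le> (\<Sum>s\<in>A. (g s - g b) * d s)"
    apply (rule insert.IH)
    using insert.prems(1) insert.hyps(2) tailA
    by (auto simp: mono_def intro: order.strict_implies_order)
  have "(\<Sum>s\<in>insert b A. g s * d s) = g b * (\<Sum>s\<in>insert b A. d s) + (\<Sum>s\<in>A. (g s - g b) * d s)"
    using bnot insert.hyps(1)
    by (simp add: sum_distrib_left left_diff_distrib sum_subtractf algebra_simps)
  moreover have "0 \<le> g b * (\<Sum>s\<in>insert b A. d s)" using tot insert.prems(2) by simp
  ultimately show ?case using IH by linarith
qed

lemma fosd_dot:
  fixes q r g :: "'s::{finite,linorder} \<Rightarrow> real"
  assumes "fosd q r" "sum q UNIV = sum r UNIV" "mono g"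
  shows "(\<Sum>s\<in>UNIV. g s * r s) \<le> (\<Sum>s\<in>UNIV. g s * q s)"
proof -
  define m where "m = Min (UNIV::'s set)"
  have m: "m \<le> s" for s unfolding m_def by simp
  have "0 \<le> (\<Sum>s\<in>UNIV. (g s - g m) * (q s - r s))"
    apply (rule abel_aux)
    using assms(1,3) m
    by (auto simp: mono_def fosd_def sum_subtractf)
  moreover have "(\<Sum>s\<in>UNIV. (g s - g m) * (q s - r s)) =
       (\<Sum>s\<in>UNIV. g s * q s) - (\<Sum>s\<in>UNIV. g s * r s) - g m * (sum q UNIV - sum r UNIV)"
    by (simp add: algebra_simps sum_subtractf sum.distrib sum_distrib_left)
  ultimately show ?thesis using assms(2) by simp
qed

lemma grounded_ex:
  assumes "grounded c"
  shows "\<exists>p\<in>prob_simplex. c p < 1"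
proof -
  have "(INF p\<in>prob_simplex. c p) < 1" using assms unfolding grounded_def by simp
  then show ?thesis by (simp add: INF_less_iff)
qed

lemma dot_le_abs:
  assumes "p \<in> prob_simplex"
  shows "(\<Sum>s\<in>UNIV. f s * p s) \<le> (\<Sum>s\<in>UNIV. \<bar>f s\<bar>)"
proof -
  have "(\<Sum>s\<in>UNIV. f s * p s) \<le> (\<Sum>s\<in>UNIV. \<bar>f s\<bar> * p s)"
    using assms by (intro sum_mono) (auto simp: prob_simplex_def intro!: mult_right_mono)
  also have "\<dots> \<le> (\<Sum>s\<in>UNIV. \<bar>f s\<bar> * 1)"
  proof (intro sum_mono mult_left_mono)
    fix s
    have "p s \<le> (\<Sum>s\<in>UNIV. p s)"
      using assms by (intro member_le_sum) (auto simp: prob_simplex_def)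
    then show "p s \<le> 1" using assms by (simp add: prob_simplex_def)
  qed auto
  finally show ?thesis by simp
qed

lemma val_upper:
  fixes c :: "('s::finite \<Rightarrow> real) \<Rightarrow> ereal" and p :: "'s \<Rightarrow> real" and f :: "'s \<Rightarrow> real"
  assumes "p \<in> prob_simplex"
  shows "- c p + ereal (\<Sum>s\<in>UNIV. f s * p s) \<le> val c f"
  unfolding val_def using assms by (rule SUP_upper2) simp

lemma val_real:
  fixes c :: "('s::finite \<Rightarrow> real) \<Rightarrow> ereal"
  assumes "nonneg_cost c" "grounded c"
  shows "\<exists>r. val c f = ereal r"
proof -
  obtain p0 where p0: "p0 \<in> prob_simplex" "c p0 < 1" using grounded_ex assms(2) by blast
  have "0 \<le> c p0" using assms(1) p0 by (simp add: nonneg_cost_def)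
  then obtain x where x: "c p0 = ereal x" using p0(2) by (cases "c p0") auto
  have "ereal (- x + (\<Sum>s\<in>UNIV. f s * p0 s)) \<le> val c f"
    using val_upper[of p0 c f, OF p0(1)] x by simp
  moreover have "val c f \<le> ereal (\<Sum>s\<in>UNIV. \<bar>f s\<bar>)"
    unfolding val_def
  proof (rule SUP_least)
    fix p :: "'s \<Rightarrow> real" assume p: "p \<in> prob_simplex"
    have "0 \<le> c p" using assms(1) p by (simp add: nonneg_cost_def)
    then show "- c p + ereal (\<Sum>s\<in>UNIV. f s * p s) \<le> ereal (\<Sum>s\<in>UNIV. \<bar>f s\<bar>)"
      using dot_le_abs[OF p, of f] by (cases "c p") auto
  qed
  ultimately show ?thesis by (cases "val c f") auto
qed

lemma fin_of_le:
  assumes "nonneg_cost c" "p \<in> prob_simplex" "c p \<le> ereal a"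
  obtains x where "c p = ereal x" "0 \<le> x" "x \<le> a"
  using assms unfolding nonneg_cost_def by (cases "c p") auto

lemma fin2:
  assumes "nonneg_cost c" "nonneg_cost c'" "p \<in> prob_simplex" "p' \<in> prob_simplex"
    "c p + c' p' \<le> ereal a"
  obtains x y where "c p = ereal x" "c' p' = ereal y" "0 \<le> x" "0 \<le> y" "x + y \<le> a"
proof -
  have "0 \<le> c p" "0 \<le> c' p'" using assms by (auto simp: nonneg_cost_def)
  then show ?thesis using assms(5) that by (cases "c p"; cases "c' p'") auto
qed

lemma supermod:
  fixes c c' :: "('s::{finite,linorder} \<Rightarrow> real) \<Rightarrow> ereal"
  assumes up: "up_shifted c c'" and nn: "nonneg_cost c" "nonneg_cost c'"
    and v: "val c f = ereal v1" "val c f' = ereal v2" "val c' f = ereal w1" "val c' f' = ereal w2"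
    and mono: "mono (\<lambda>s. f s - f' s)"
  shows "v2 + w1 \<le> v1 + w2"
proof (rule field_le_epsilon)
  fix e :: real assume e: "0 < e"
  have "ereal (v2 - e/2) < val c f'" using v e by simp
  then obtain p where p: "p \<in> prob_simplex" "ereal (v2 - e/2) < - c p + ereal (\<Sum>s\<in>UNIV. f' s * p s)"
    unfolding val_def by (auto simp: less_SUP_iff)
  have "0 \<le> c p" using nn p by (simp add: nonneg_cost_def)
  then obtain x where x: "c p = ereal x" using p(2) by (cases "c p") auto
  have "ereal (w1 - e/2) < val c' f" using v e by simp
  then obtain p' where p': "p' \<in> prob_simplex" "ereal (w1 - e/2) < - c' p' + ereal (\<Sum>s\<in>UNIV. f s * p' s)"
    unfolding val_def by (auto simp: less_SUP_iff)
  have "0 \<le> c' p'" using nn p' by (simp add: nonneg_cost_def)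
  then obtain x' where x': "c' p' = ereal x'" using p'(2) by (cases "c' p'") auto
  obtain q q' where q: "q \<in> prob_simplex" "q' \<in> prob_simplex" "fosd p q'" "fosd q p'"
    and avg: "(\<lambda>s. (1/2) * p s + (1/2) * p' s) = (\<lambda>s. (1/2) * q s + (1/2) * q' s)"
    and cq: "c q + c' q' \<le> c p + c' p'"
    using up p(1) p'(1) unfolding up_shifted_def by blast
  obtain y y' where y: "c q = ereal y" "c' q' = ereal y'" "y + y' \<le> x + x'"
  proof -
    have "c q + c' q' \<le> ereal (x + x')" using cq x x' by simp
    then show ?thesis using fin2[OF nn q(1,2)] that by blast
  qed
  have q'eq: "q' s = p s + p' s - q s" for s using fun_cong[OF avg, of s] by simp
  have "ereal (- y + (\<Sum>s\<in>UNIV. f s * q s)) \<le> val c f" using val_upper[of q c f, OF q(1)] y by simp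
  then have h1: "- y + (\<Sum>s\<in>UNIV. f s * q s) \<le> v1" using v by simp
  have "ereal (- y' + (\<Sum>s\<in>UNIV. f' s * q' s)) \<le> val c' f'" using val_upper[of q' c' f', OF q(2)] y by simp
  then have h2: "- y' + (\<Sum>s\<in>UNIV. f' s * q' s) \<le> w2" using v by simp
  have h3: "v2 - e/2 < - x + (\<Sum>s\<in>UNIV. f' s * p s)" using p(2) x by simp
  have h4: "w1 - e/2 < - x' + (\<Sum>s\<in>UNIV. f s * p' s)" using p'(2) x' by simp
  have sq: "sum q UNIV = sum p' UNIV" using q(1) p'(1) by (simp add: prob_simplex_def)
  have fd: "(\<Sum>s\<in>UNIV. (f s - f' s) * p' s) \<le> (\<Sum>s\<in>UNIV. (f s - f' s) * q s)"
    by (rule fosd_dot[OF q(4) sq mono])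
  have "(\<Sum>s\<in>UNIV. f s * q s) + (\<Sum>s\<in>UNIV. f' s * q' s) - (\<Sum>s\<in>UNIV. f' s * p s) - (\<Sum>s\<in>UNIV. f s * p' s)
      = (\<Sum>s\<in>UNIV. (f s - f' s) * q s) - (\<Sum>s\<in>UNIV. (f s - f' s) * p' s)"
    by (simp add: q'eq algebra_simps sum.distrib sum_subtractf)
  then show "v2 + w1 \<le> v1 + w2 + e" using h1 h2 h3 h4 fd y(3) by linarith
qed

lemma val_shift:
  fixes c :: "('s::finite \<Rightarrow> real) \<Rightarrow> ereal"
  assumes "grounded c"
  shows "val c (\<lambda>s. g s - k) + ereal k = val c g"
proof -
  have ne: "prob_simplex \<noteq> ({} :: ('s \<Rightarrow> real) set)" using grounded_ex[OF assms] by blast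
  have eq: "- c q + ereal (\<Sum>s\<in>UNIV. (g s - k) * q s) + ereal k = - c q + ereal (\<Sum>s\<in>UNIV. g s * q s)"
    if q: "q \<in> prob_simplex" for q
  proof -
    have "(\<Sum>s\<in>UNIV. (g s - k) * q s) = (\<Sum>s\<in>UNIV. g s * q s) - k * (\<Sum>s\<in>UNIV. q s)"
      by (simp add: algebra_simps sum_subtractf sum_distrib_left)
    also have "\<dots> = (\<Sum>s\<in>UNIV. g s * q s) - k" using q by (simp add: prob_simplex_def)
    finally show ?thesis by (cases "c q") auto
  qed
  have "val c (\<lambda>s. g s - k) + ereal k = (SUP q\<in>prob_simplex. - c q + ereal (\<Sum>s\<in>UNIV. (g s - k) * q s) + ereal k)"
    unfolding val_def by (rule SUP_ereal_add_left[symmetric]) (use ne in auto)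
  also have "\<dots> = val c g" unfolding val_def by (rule SUP_cong) (auto simp: eq)
  finally show ?thesis .
qed

lemma contra_step:
  fixes c c' :: "('s::{finite,linorder} \<Rightarrow> real) \<Rightarrow> ereal"
  assumes nn: "nonneg_cost c" "nonneg_cost c'" and gr: "grounded c" "grounded c'"
    and B: "\<forall>f f' :: 's \<Rightarrow> real. mono (\<lambda>s. f s - f' s) \<longrightarrow> (val c' f \<ge> val c' f' \<longrightarrow> val c f \<ge> val c f')"
    and p: "p \<in> prob_simplex" "p' \<in> prob_simplex" and A: "c p + c' p' = ereal A"
    and H: "mono H" and d: "0 < d"
    and key: "\<And>q q' x y. q \<in> prob_simplex \<Longrightarrow> q' \<in> prob_simplex \<Longrightarrow> c q = ereal x \<Longrightarrow> c' q' = ereal y \<Longrightarrow>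
       A + d + (\<Sum>s\<in>UNIV. F s * (q s + q' s - p s - p' s)) + (\<Sum>s\<in>UNIV. H s * (q s - p' s)) \<le> x + y"
  shows False
proof -
  define G where "G s = F s + H s" for s
  obtain v1 where v1: "val c G = ereal v1" using val_real[OF nn(1) gr(1)] by blast
  obtain v2 where v2: "val c F = ereal v2" using val_real[OF nn(1) gr(1)] by blast
  obtain w1 where w1: "val c' G = ereal w1" using val_real[OF nn(2) gr(2)] by blast
  obtain w2 where w2: "val c' F = ereal w2" using val_real[OF nn(2) gr(2)] by blast
  obtain xp yp where xy: "c p = ereal xp" "c' p' = ereal yp" "xp + yp \<le> A"
    using fin2[OF nn p, of A] A by (metis order_refl)
  have xyA: "xp + yp = A" using A xy by simp
  have "ereal (- xp + (\<Sum>s\<in>UNIV. F s * p s)) \<le> val c F" using val_upper[of p c F, OF p(1)] xy by simp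
  then have l1: "- xp + (\<Sum>s\<in>UNIV. F s * p s) \<le> v2" using v2 by simp
  have "ereal (- yp + (\<Sum>s\<in>UNIV. G s * p' s)) \<le> val c' G" using val_upper[of p' c' G, OF p(2)] xy by simp
  then have l2: "- yp + (\<Sum>s\<in>UNIV. G s * p' s) \<le> w1" using w1 by simp
  define R where "R = - A - d + (\<Sum>s\<in>UNIV. F s * p s) + (\<Sum>s\<in>UNIV. G s * p' s)"
  have "val c G \<le> ereal (R - w2)"
    unfolding val_def
  proof (rule SUP_least)
    fix q :: "'s \<Rightarrow> real" assume q: "q \<in> prob_simplex"
    show "- c q + ereal (\<Sum>s\<in>UNIV. G s * q s) \<le> ereal (R - w2)"
    proof (cases "c q")
      case (real x)
      have "val c' F \<le> ereal (R + x - (\<Sum>s\<in>UNIV. G s * q s))"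
        unfolding val_def
      proof (rule SUP_least)
        fix q' :: "'s \<Rightarrow> real" assume q': "q' \<in> prob_simplex"
        show "- c' q' + ereal (\<Sum>s\<in>UNIV. F s * q' s) \<le> ereal (R + x - (\<Sum>s\<in>UNIV. G s * q s))"
        proof (cases "c' q'")
          case (real y)
          have k: "A + d + (\<Sum>s\<in>UNIV. F s * (q s + q' s - p s - p' s)) + (\<Sum>s\<in>UNIV. H s * (q s - p' s)) \<le> x + y"
            using key[OF q q'] \<open>c q = ereal x\<close> real by blast
          have e1: "(\<Sum>s\<in>UNIV. F s * (q s + q' s - p s - p' s)) = (\<Sum>s\<in>UNIV. F s * q s) + (\<Sum>s\<in>UNIV. F s * q' s) - (\<Sum>s\<in>UNIV. F s * p s) - (\<Sum>s\<in>UNIV. F s * p' s)"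
            by (simp add: algebra_simps sum.distrib sum_subtractf)
          have e2: "(\<Sum>s\<in>UNIV. H s * (q s - p' s)) = (\<Sum>s\<in>UNIV. H s * q s) - (\<Sum>s\<in>UNIV. H s * p' s)"
            by (simp add: algebra_simps sum.distrib sum_subtractf)
          have e3: "(\<Sum>s\<in>UNIV. G s * q s) = (\<Sum>s\<in>UNIV. F s * q s) + (\<Sum>s\<in>UNIV. H s * q s)"
            by (simp add: G_def algebra_simps sum.distrib)
          have e4: "(\<Sum>s\<in>UNIV. G s * p' s) = (\<Sum>s\<in>UNIV. F s * p' s) + (\<Sum>s\<in>UNIV. H s * p' s)"
            by (simp add: G_def algebra_simps sum.distrib)
          have "- y + (\<Sum>s\<in>UNIV. F s * q' s) \<le> R + x - (\<Sum>s\<in>UNIV. G s * q s)"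
            using k e1 e2 e3 e4 unfolding R_def by linarith
          then show ?thesis using real by simp
        qed (use nn q' in \<open>auto simp: nonneg_cost_def\<close>)
      qed
      then have "w2 \<le> R + x - (\<Sum>s\<in>UNIV. G s * q s)" using w2 by simp
      then show ?thesis using real by simp
    qed (use nn q in \<open>auto simp: nonneg_cost_def\<close>)
  qed
  then have l3: "v1 + w2 \<le> R" using v1 by simp
  define k where "k = w1 - w2"
  have sh1: "val c' (\<lambda>s. G s - k) + ereal k = val c' G" by (rule val_shift[OF gr(2)])
  have sh2: "val c (\<lambda>s. G s - k) + ereal k = val c G" by (rule val_shift[OF gr(1)])
  have m: "mono (\<lambda>s. (G s - k) - F s)"
    using H unfolding mono_def G_def by auto
  have "val c' (\<lambda>s. G s - k) = ereal w2" using sh1 w1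
    by (cases "val c' (\<lambda>s. G s - k)") (auto simp: k_def)
  then have "val c' (\<lambda>s. G s - k) \<ge> val c' F" using w2 by simp
  then have "val c (\<lambda>s. G s - k) \<ge> val c F" using B[rule_format, of "\<lambda>s. G s - k" F] m by simp
  moreover have "val c (\<lambda>s. G s - k) = ereal (v1 - k)" using sh2 v1
    by (cases "val c (\<lambda>s. G s - k)") auto
  ultimately have "v2 \<le> v1 - k" using v2 by simp
  then show False using l1 l2 l3 xyA d unfolding R_def k_def by linarith
qed

lemma mix_simplex:
  assumes "q1 \<in> prob_simplex" "q2 \<in> prob_simplex" "0 \<le> u" "0 \<le> v" "u + v = 1"
  shows "(\<lambda>s. u * q1 s + v * q2 s) \<in> prob_simplex"
proof -
  have "(\<Sum>s\<in>UNIV. u * q1 s + v * q2 s) = u * (\<Sum>s\<in>UNIV. q1 s) + v * (\<Sum>s\<in>UNIV. q2 s)"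
    by (simp add: sum.distrib sum_distrib_left)
  then show ?thesis using assms by (auto simp: prob_simplex_def)
qed

definition tailD :: "('s::{finite,linorder} \<Rightarrow> real) set" where
  "tailD = {e. \<forall>t. 0 \<le> (\<Sum>s\<in>{s. t \<le> s}. e s)}"

lemma mix_tailD:
  assumes "e1 \<in> tailD" "e2 \<in> tailD" "0 \<le> u" "0 \<le> v"
  shows "(\<lambda>s. u * e1 s + v * e2 s) \<in> tailD"
proof -
  have "(\<Sum>s\<in>{s. t \<le> s}. u * e1 s + v * e2 s) = u * (\<Sum>s\<in>{s. t \<le> s}. e1 s) + v * (\<Sum>s\<in>{s. t \<le> s}. e2 s)" for t
    by (simp add: sum.distrib sum_distrib_left)
  then show ?thesis using assms by (auto simp: tailD_def)
qed

definition Zset :: "(('s::{finite,linorder} \<Rightarrow> real) \<Rightarrow> ereal) \<Rightarrow> (('s \<Rightarrow> real) \<Rightarrow> ereal) \<Rightarrow> ('s \<Rightarrow> real) \<Rightarrow> ('s \<Rightarrow> real) \<Rightarrow> ((real, 's) vec \<times> (real, 's) vec \<times> real) set" where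
  "Zset c c' p p' = {((\<chi> s. q s + q' s - p s - p' s), (\<chi> s. q s - p' s - e s), \<alpha>) | q q' e \<alpha>.
      q \<in> prob_simplex \<and> q' \<in> prob_simplex \<and> e \<in> tailD \<and> c q + c' q' \<le> ereal \<alpha>}"

lemma Zset_memI:
  "q \<in> prob_simplex \<Longrightarrow> q' \<in> prob_simplex \<Longrightarrow> e \<in> tailD \<Longrightarrow> c q + c' q' \<le> ereal \<alpha> \<Longrightarrow>
   ((\<chi> s. q s + q' s - p s - p' s), (\<chi> s. q s - p' s - e s), \<alpha>) \<in> Zset c c' p p'"
  unfolding Zset_def by blast

lemma Zset_convex:
  fixes c c' :: "('s::{finite,linorder} \<Rightarrow> real) \<Rightarrow> ereal"
  assumes nn: "nonneg_cost c" "nonneg_cost c'" and cv: "convex_cost c" "convex_cost c'"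
  shows "convex (Zset c c' p p')"
proof (rule convexI)
  fix x y and u v :: real assume x: "x \<in> Zset c c' p p'" and y: "y \<in> Zset c c' p p'" and uv: "0 \<le> u" "0 \<le> v" "u + v = 1"
  obtain q1 q1' e1 a1 where x1: "x = ((\<chi> s. q1 s + q1' s - p s - p' s), (\<chi> s. q1 s - p' s - e1 s), a1)"
    and h1: "q1 \<in> prob_simplex" "q1' \<in> prob_simplex" "e1 \<in> tailD" "c q1 + c' q1' \<le> ereal a1"
    using x unfolding Zset_def by blast
  obtain q2 q2' e2 a2 where y2: "y = ((\<chi> s. q2 s + q2' s - p s - p' s), (\<chi> s. q2 s - p' s - e2 s), a2)"
    and h2: "q2 \<in> prob_simplex" "q2' \<in> prob_simplex" "e2 \<in> tailD" "c q2 + c' q2' \<le> ereal a2"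
    using y unfolding Zset_def by blast
  obtain x1 y1 where f1: "c q1 = ereal x1" "c' q1' = ereal y1" "x1 + y1 \<le> a1"
    using fin2[OF nn h1(1,2) h1(4)] by metis
  obtain x2 y2 where f2: "c q2 = ereal x2" "c' q2' = ereal y2" "x2 + y2 \<le> a2"
    using fin2[OF nn h2(1,2) h2(4)] by metis
  have v: "v = 1 - u" using uv by simp
  define Q where "Q = (\<lambda>s. u * q1 s + v * q2 s)"
  define Q' where "Q' = (\<lambda>s. u * q1' s + v * q2' s)"
  define E where "E = (\<lambda>s. u * e1 s + v * e2 s)"
  have u1: "u \<le> 1" using uv by simp
  have cQ0: "c Q \<le> ereal u * c q1 + ereal (1 - u) * c q2"
    using cv(1) h1(1) h2(1) uv(1) u1 unfolding convex_cost_def Q_def v by blast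
  have cQ: "c Q \<le> ereal (u * x1 + v * x2)" using cQ0 f1(1) f2(1) v by simp
  have cQ0': "c' Q' \<le> ereal u * c' q1' + ereal (1 - u) * c' q2'"
    using cv(2) h1(2) h2(2) uv(1) u1 unfolding convex_cost_def Q'_def v by blast
  have cQ': "c' Q' \<le> ereal (u * y1 + v * y2)" using cQ0' f1(2) f2(2) v by simp
  have "u * (x1 + y1) + v * (x2 + y2) \<le> u * a1 + v * a2"
    using f1(3) f2(3) uv by (intro add_mono mult_left_mono) auto
  then have cc: "c Q + c' Q' \<le> ereal (u * a1 + v * a2)"
  proof -
    have "c Q + c' Q' \<le> ereal (u * x1 + v * x2) + ereal (u * y1 + v * y2)" using add_mono[OF cQ cQ'] .
    also have "\<dots> = ereal (u * (x1 + y1) + v * (x2 + y2))" by (simp add: algebra_simps)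
    finally show ?thesis using \<open>u * (x1 + y1) + v * (x2 + y2) \<le> u * a1 + v * a2\<close> by (meson ereal_less_eq(3) order_trans)
  qed
  have eq: "u *\<^sub>R x + v *\<^sub>R y = ((\<chi> s. Q s + Q' s - p s - p' s), (\<chi> s. Q s - p' s - E s), u * a1 + v * a2)"
    unfolding x1 y2 Q_def Q'_def E_def v by (simp add: vec_eq_iff algebra_simps)
  show "u *\<^sub>R x + v *\<^sub>R y \<in> Zset c c' p p'"
    unfolding eq
    using mix_simplex[OF h1(1) h2(1) uv] mix_simplex[OF h1(2) h2(2) uv] mix_tailD[OF h1(3) h2(3) uv(1,2)] cc
    unfolding Q_def[symmetric] Q'_def[symmetric] E_def[symmetric] by (rule Zset_memI)
qed

lemma ereal_split:
  fixes a b :: ereal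
  assumes "0 \<le> a" "0 \<le> b" "ereal A < a + b"
  shows "\<exists>x y. ereal x < a \<and> ereal y < b \<and> A < x + y"
proof (cases a)
  case (real \<alpha>)
  show ?thesis
  proof (cases b)
    case (real \<beta>)
    have "A < \<alpha> + \<beta>" using assms \<open>a = ereal \<alpha>\<close> real by simp
    define x where "x = \<alpha> - (\<alpha> + \<beta> - A)/3"
    define y where "y = \<beta> - (\<alpha> + \<beta> - A)/3"
    have "A < x + y" using \<open>A < \<alpha> + \<beta>\<close> unfolding x_def y_def by (simp add: field_simps)
    moreover have "x < \<alpha>" "y < \<beta>" using \<open>A < \<alpha> + \<beta>\<close> unfolding x_def y_def by (simp_all add: field_simps)
    ultimately have "ereal x < a \<and> ereal y < b \<and> A < x + y"
      using \<open>a = ereal \<alpha>\<close> real by auto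
    then show ?thesis by blast
  next
    case PInf
    have "ereal (\<alpha> - 1) < a \<and> ereal (A + 2 - \<alpha>) < b \<and> A < (\<alpha> - 1) + (A + 2 - \<alpha>)"
      using \<open>a = ereal \<alpha>\<close> PInf by auto
    then show ?thesis by blast
  next
    case MInf then show ?thesis using assms(2) by simp
  qed
next
  case PInf
  have "ereal (A + 2) < a \<and> ereal (-1) < b \<and> A < (A + 2) + (-1)"
    using PInf assms(2) by (auto intro: less_le_trans[of _ 0])
  then show ?thesis by blast
next
  case MInf then show ?thesis using assms(1) by simp
qed

lemma Zset_closure:
  fixes c c' :: "('s::{finite,linorder} \<Rightarrow> real) \<Rightarrow> ereal"
  assumes nn: "nonneg_cost c" "nonneg_cost c'" and ls: "lsc_cost c" "lsc_cost c'"
    and nf: "\<And>q q'. q \<in> prob_simplex \<Longrightarrow> q' \<in> prob_simplex \<Longrightarrow> (\<forall>s. q s + q' s = p s + p' s) \<Longrightarrow>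
       (\<lambda>s. q s - p' s) \<in> tailD \<Longrightarrow> c q + c' q' \<le> ereal A \<Longrightarrow> False"
  shows "(0, 0, A) \<notin> closure (Zset c c' p p')"
proof
  assume "(0, 0, A) \<in> closure (Zset c c' p p')"
  then obtain X where X: "\<And>n. X n \<in> Zset c c' p p'" and Xl: "X \<longlonglongrightarrow> (0, 0, A)"
    unfolding closure_sequential by blast
  define P where "P n w \<longleftrightarrow> X n = ((\<chi> s. fst w s + fst (snd w) s - p s - p' s), (\<chi> s. fst w s - p' s - fst (snd (snd w)) s), snd (snd (snd w)))
      \<and> fst w \<in> prob_simplex \<and> fst (snd w) \<in> prob_simplex \<and> fst (snd (snd w)) \<in> tailD
      \<and> c (fst w) + c' (fst (snd w)) \<le> ereal (snd (snd (snd w)))" for n w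
  have "\<forall>n. \<exists>w. P n w"
  proof
    fix n
    obtain q q' e \<alpha> where "X n = ((\<chi> s. q s + q' s - p s - p' s), (\<chi> s. q s - p' s - e s), \<alpha>)"
      "q \<in> prob_simplex" "q' \<in> prob_simplex" "e \<in> tailD" "c q + c' q' \<le> ereal \<alpha>"
      using X[of n] unfolding Zset_def by blast
    then have "P n (q, q', e, \<alpha>)" unfolding P_def by simp
    then show "\<exists>w. P n w" by blast
  qed
  then obtain w where w0: "\<And>n. P n (w n)" by metis
  note w = w0[unfolded P_def]
  define Q where "Q n = fst (w n)" for n
  define Q' where "Q' n = fst (snd (w n))" for n
  define E where "E n = fst (snd (snd (w n)))" for n
  define Al where "Al n = snd (snd (snd (w n)))" for n
  have Xn: "X n = ((\<chi> s. Q n s + Q' n s - p s - p' s), (\<chi> s. Q n s - p' s - E n s), Al n)" for n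
    using w[of n] unfolding Q_def Q'_def E_def Al_def by blast
  have QS: "Q n \<in> prob_simplex" "Q' n \<in> prob_simplex" "E n \<in> tailD" "c (Q n) + c' (Q' n) \<le> ereal (Al n)" for n
    using w[of n] unfolding Q_def Q'_def E_def Al_def by blast+
  define V where "V n = ((\<chi> s. Q n s) :: (real, 's) vec, (\<chi> s. Q' n s) :: (real, 's) vec)" for n
  have nb: "norm ((\<chi> s. q s) :: (real, 's) vec) \<le> 1" if "q \<in> prob_simplex" for q
  proof -
    have "norm ((\<chi> s. q s) :: (real, 's) vec) \<le> (\<Sum>s\<in>UNIV. \<bar>q s\<bar>)"
      using norm_le_l1_cart[of "(\<chi> s. q s) :: (real, 's) vec"] by simp
    also have "\<dots> = 1" using that by (simp add: prob_simplex_def)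
    finally show ?thesis .
  qed
  have "range V \<subseteq> cball 0 1 \<times> cball 0 1"
    using nb QS unfolding V_def by auto
  then have "bounded (range V)"
    by (rule bounded_subset[rotated]) (intro bounded_Times bounded_cball)
  then obtain l r where r: "strict_mono (r :: nat \<Rightarrow> nat)" and lr: "(V \<circ> r) \<longlonglongrightarrow> l"
    using bounded_imp_convergent_subsequence by blast
  define q where "q s = fst l $ s" for s
  define q' where "q' s = snd l $ s" for s
  have cq: "(\<lambda>n. Q (r n) s) \<longlonglongrightarrow> q s" for s
  proof -
    have "(\<lambda>n. fst (V (r n))) \<longlonglongrightarrow> fst l" using tendsto_fst[OF lr] by (simp add: o_def)
    then have "(\<lambda>n. fst (V (r n)) $ s) \<longlonglongrightarrow> fst l $ s" by (rule tendsto_vec_nth)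
    then show ?thesis unfolding V_def q_def by simp
  qed
  have cq': "(\<lambda>n. Q' (r n) s) \<longlonglongrightarrow> q' s" for s
  proof -
    have "(\<lambda>n. snd (V (r n))) \<longlonglongrightarrow> snd l" using tendsto_snd[OF lr] by (simp add: o_def)
    then have "(\<lambda>n. snd (V (r n)) $ s) \<longlonglongrightarrow> snd l $ s" by (rule tendsto_vec_nth)
    then show ?thesis unfolding V_def q'_def by simp
  qed
  have cQf: "(\<lambda>n. Q (r n)) \<longlonglongrightarrow> q"
  proof -
    have ic: "isCont (\<lambda>v::(real, 's) vec. \<lambda>s. v $ s) x" for x
      by (rule continuous_on_interior[of UNIV])
        (intro continuous_intros continuous_on_coordinatewise_then_product, auto)
    have "(\<lambda>n. fst (V (r n))) \<longlonglongrightarrow> fst l" using tendsto_fst[OF lr] by (simp add: o_def)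
    from isCont_tendsto_compose[OF ic this] show ?thesis unfolding V_def q_def by simp
  qed
  have cQf': "(\<lambda>n. Q' (r n)) \<longlonglongrightarrow> q'"
  proof -
    have ic: "isCont (\<lambda>v::(real, 's) vec. \<lambda>s. v $ s) x" for x
      by (rule continuous_on_interior[of UNIV])
        (intro continuous_intros continuous_on_coordinatewise_then_product, auto)
    have "(\<lambda>n. snd (V (r n))) \<longlonglongrightarrow> snd l" using tendsto_snd[OF lr] by (simp add: o_def)
    from isCont_tendsto_compose[OF ic this] show ?thesis unfolding V_def q'_def by simp
  qed
  have XR: "(\<lambda>n. X (r n)) \<longlonglongrightarrow> (0, 0, A)"
    using LIMSEQ_subseq_LIMSEQ[OF Xl r] by (simp add: o_def)
  have x1: "(\<lambda>n. Q (r n) s + Q' (r n) s - p s - p' s) \<longlonglongrightarrow> 0" for s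
  proof -
    have "(\<lambda>n. fst (X (r n)) $ s) \<longlonglongrightarrow> (0::(real,'s) vec) $ s"
      by (rule tendsto_vec_nth) (use tendsto_fst[OF XR] in simp)
    then show ?thesis unfolding Xn by simp
  qed
  have x2: "(\<lambda>n. Q (r n) s - p' s - E (r n) s) \<longlonglongrightarrow> 0" for s
  proof -
    have "(\<lambda>n. fst (snd (X (r n))) $ s) \<longlonglongrightarrow> (0::(real,'s) vec) $ s"
      by (rule tendsto_vec_nth) (use tendsto_fst[OF tendsto_snd[OF XR]] in simp)
    then show ?thesis unfolding Xn by simp
  qed
  have x3: "(\<lambda>n. Al (r n)) \<longlonglongrightarrow> A"
    using tendsto_snd[OF tendsto_snd[OF XR]] unfolding Xn by simp
  have sumeq: "q s + q' s = p s + p' s" for s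
  proof -
    have "(\<lambda>n. Q (r n) s + Q' (r n) s - p s - p' s) \<longlonglongrightarrow> q s + q' s - p s - p' s"
      by (intro tendsto_intros cq cq')
    with x1[of s] have "q s + q' s - p s - p' s = 0" using LIMSEQ_unique by blast
    then show ?thesis by simp
  qed
  have cE: "(\<lambda>n. E (r n) s) \<longlonglongrightarrow> q s - p' s" for s
  proof -
    have "(\<lambda>n. Q (r n) s - p' s - (Q (r n) s - p' s - E (r n) s)) \<longlonglongrightarrow> q s - p' s - 0"
      by (intro tendsto_intros cq x2)
    then show ?thesis by simp
  qed
  have tl: "(\<lambda>s. q s - p' s) \<in> tailD"
    unfolding tailD_def
  proof (intro CollectI allI)
    fix t :: 's
    have "(\<lambda>n. \<Sum>s\<in>{s. t \<le> s}. E (r n) s) \<longlonglongrightarrow> (\<Sum>s\<in>{s. t \<le> s}. q s - p' s)"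
      by (intro tendsto_sum cE)
    moreover have "0 \<le> (\<Sum>s\<in>{s. t \<le> s}. E (r n) s)" for n
      using QS(3)[of "r n"] unfolding tailD_def by blast
    ultimately show "0 \<le> (\<Sum>s\<in>{s. t \<le> s}. q s - p' s)"
      by (intro LIMSEQ_le_const) auto
  qed
  have simp_lim: "z \<in> prob_simplex" if zc: "\<And>s. (\<lambda>n. Z n s) \<longlonglongrightarrow> z s" and zs: "\<And>n. Z n \<in> prob_simplex" for Z z
  proof -
    have "0 \<le> z s" for s
      using zs by (intro LIMSEQ_le_const[OF zc]) (auto simp: prob_simplex_def)
    moreover have "(\<lambda>n. \<Sum>s\<in>UNIV. Z n s) \<longlonglongrightarrow> (\<Sum>s\<in>UNIV. z s)" by (intro tendsto_sum zc)
    then have "(\<lambda>n. 1::real) \<longlonglongrightarrow> (\<Sum>s\<in>UNIV. z s)" using zs by (simp add: prob_simplex_def)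
    then have "(\<Sum>s\<in>UNIV. z s) = 1" using LIMSEQ_unique tendsto_const by blast
    ultimately show ?thesis by (simp add: prob_simplex_def)
  qed
  have qS: "q \<in> prob_simplex" by (rule simp_lim[OF cq QS(1)[of "r _"]])
  have qS': "q' \<in> prob_simplex" by (rule simp_lim[OF cq' QS(2)[of "r _"]])
  have lc: "c q \<le> liminf (\<lambda>n. c (Q (r n)))"
    using ls(1)[unfolded lsc_cost_def, rule_format, OF qS, of "\<lambda>n. Q (r n)"] QS(1) cQf by simp
  have lc': "c' q' \<le> liminf (\<lambda>n. c' (Q' (r n)))"
    using ls(2)[unfolded lsc_cost_def, rule_format, OF qS', of "\<lambda>n. Q' (r n)"] QS(2) cQf' by simp
  have sumeq': "\<forall>s. q s + q' s = p s + p' s" using sumeq by blast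
  have "\<not> c q + c' q' \<le> ereal A" using nf[OF qS qS' sumeq' tl] by blast
  then have gt: "ereal A < c q + c' q'" by simp
  have "0 \<le> c q" "0 \<le> c' q'" using nn qS qS' by (auto simp: nonneg_cost_def)
  then obtain a b where ab: "ereal a < c q" "ereal b < c' q'" "A < a + b"
    using ereal_split gt by blast
  have "eventually (\<lambda>n. ereal a < c (Q (r n))) sequentially"
    by (rule less_LiminfD) (rule less_le_trans[OF ab(1) lc])
  moreover have "eventually (\<lambda>n. ereal b < c' (Q' (r n))) sequentially"
    by (rule less_LiminfD) (rule less_le_trans[OF ab(2) lc'])
  moreover have "eventually (\<lambda>n. Al (r n) < a + b) sequentially"
    using order_tendstoD(2)[OF x3 ab(3)] .
  ultimately have "eventually (\<lambda>n. ereal a < c (Q (r n)) \<and> ereal b < c' (Q' (r n)) \<and> Al (r n) < a + b) sequentially"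
    by (simp add: eventually_conj_iff)
  then obtain n where n: "ereal a < c (Q (r n))" "ereal b < c' (Q' (r n))" "Al (r n) < a + b"
    using eventually_sequentially by auto
  obtain xx yy where "c (Q (r n)) = ereal xx" "c' (Q' (r n)) = ereal yy" "xx + yy \<le> Al (r n)"
    using fin2[OF nn QS(1,2) QS(4)] by metis
  then show False using n by simp
qed

lemma inner_form:
  fixes a1 a2 :: "(real, 's::finite) vec"
  shows "inner (a1, a2, \<beta>) ((\<chi> s. X s), (\<chi> s. Y s), \<alpha>) = (\<Sum>s\<in>UNIV. a1 $ s * X s) + (\<Sum>s\<in>UNIV. a2 $ s * Y s) + \<beta> * \<alpha>"
  by (simp add: inner_Pair inner_vec_def)

lemma zero_tailD: "(\<lambda>s. 0) \<in> tailD"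
  by (simp add: tailD_def)

lemma eqL_aux:
  fixes A t b \<beta> X Y :: real
  shows "A + (t * b / (1 + t * \<beta>) - A) + - (t / (1 + t * \<beta>)) * X + - (t / (1 + t * \<beta>)) * Y = (t * b - t * (X + Y)) / (1 + t * \<beta>)"
proof -
  have "(t * b - t * (X + Y)) / (1 + t * \<beta>) = t * b / (1 + t * \<beta>) - (t / (1 + t * \<beta>)) * X - (t / (1 + t * \<beta>)) * Y"
    by (simp add: diff_divide_distrib add_divide_distrib distrib_left)
  then show ?thesis by simp
qed

lemma sep_step:
  fixes c c' :: "('s::{finite,linorder} \<Rightarrow> real) \<Rightarrow> ereal"
  assumes nn: "nonneg_cost c" "nonneg_cost c'" and gr: "grounded c" "grounded c'"
    and cv: "convex_cost c" "convex_cost c'" and ls: "lsc_cost c" "lsc_cost c'"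
    and A: "c p + c' p' = ereal A" and p: "p \<in> prob_simplex" "p' \<in> prob_simplex"
    and nf: "\<And>q q'. q \<in> prob_simplex \<Longrightarrow> q' \<in> prob_simplex \<Longrightarrow> (\<forall>s. q s + q' s = p s + p' s) \<Longrightarrow>
       (\<lambda>s. q s - p' s) \<in> tailD \<Longrightarrow> c q + c' q' \<le> ereal A \<Longrightarrow> False"
  obtains F H d where "mono H" "0 < d"
    "\<And>q q' x y. q \<in> prob_simplex \<Longrightarrow> q' \<in> prob_simplex \<Longrightarrow> c q = ereal x \<Longrightarrow> c' q' = ereal y \<Longrightarrow>
       A + d + (\<Sum>s\<in>UNIV. F s * (q s + q' s - p s - p' s)) + (\<Sum>s\<in>UNIV. H s * (q s - p' s)) \<le> x + y"
proof -
  have "\<exists>a b. inner a (0, 0, A) < b \<and> (\<forall>x\<in>closure (Zset c c' p p'). inner a x > b)"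
    using separating_hyperplane_closed_point[OF convex_closure[OF Zset_convex[OF nn cv, of p p']] closed_closure Zset_closure[OF nn ls nf]] .
  then obtain a b where ab: "inner a (0, 0, A) < b" "\<And>x. x \<in> Zset c c' p p' \<Longrightarrow> inner a x > b"
    using closure_subset by blast
  obtain a1 a2 \<beta> where aeq: "a = (a1, a2, \<beta>)" by (cases a) auto
  have bA: "\<beta> * A < b" using ab(1) aeq by (simp add: inner_Pair)
  have K: "b < (\<Sum>s\<in>UNIV. a1 $ s * (q s + q' s - p s - p' s)) + (\<Sum>s\<in>UNIV. a2 $ s * (q s - p' s - e s)) + \<beta> * \<alpha>"
    if "q \<in> prob_simplex" "q' \<in> prob_simplex" "e \<in> tailD" "c q + c' q' \<le> ereal \<alpha>" for q q' e \<alpha>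
    using ab(2)[OF Zset_memI[where c=c and c'=c' and p=p and p'=p', OF that]] unfolding aeq inner_form .
  have A0: "0 \<le> A"
  proof -
    have "0 \<le> c p" "0 \<le> c' p'" using nn p by (auto simp: nonneg_cost_def)
    then have "0 \<le> c p + c' p'" by simp
    then show ?thesis using A by simp
  qed
  obtain q0 where q0: "q0 \<in> prob_simplex" "c q0 < 1" using grounded_ex[OF gr(1)] by blast
  obtain q0' where q0': "q0' \<in> prob_simplex" "c' q0' < 1" using grounded_ex[OF gr(2)] by blast
  have c02: "c q0 + c' q0' \<le> ereal \<alpha>" if "2 \<le> \<alpha>" for \<alpha>
  proof -
    have "c q0 + c' q0' \<le> 1 + 1" using add_mono[OF less_imp_le[OF q0(2)] less_imp_le[OF q0'(2)]] .
    also have "\<dots> \<le> ereal \<alpha>" using that by (simp add: one_ereal_def)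
    finally show ?thesis .
  qed
  define M0 where "M0 = (\<Sum>s\<in>UNIV. a1 $ s * (q0 s + q0' s - p s - p' s))"
  define N0 where "N0 = (\<Sum>s\<in>UNIV. a2 $ s * (q0 s - p' s))"
  have K0: "b < M0 + (\<Sum>s\<in>UNIV. a2 $ s * (q0 s - p' s - e s)) + \<beta> * \<alpha>" if "e \<in> tailD" "2 \<le> \<alpha>" for e \<alpha>
    using K[OF q0(1) q0'(1) that(1) c02[OF that(2)]] unfolding M0_def .
  have \<beta>0: "0 \<le> \<beta>"
  proof (rule ccontr)
    assume "\<not> 0 \<le> \<beta>"
    then have nb: "\<beta> < 0" by simp
    define \<alpha> where "\<alpha> = 2 + (\<bar>M0\<bar> + \<bar>N0\<bar> + \<bar>b\<bar>) / (- \<beta>)"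
    have "0 \<le> (\<bar>M0\<bar> + \<bar>N0\<bar> + \<bar>b\<bar>) / (- \<beta>)" using nb by (intro divide_nonneg_pos) auto
    then have a2: "2 \<le> \<alpha>" unfolding \<alpha>_def by simp
    have "\<beta> * \<alpha> = 2 * \<beta> - (\<bar>M0\<bar> + \<bar>N0\<bar> + \<bar>b\<bar>)" unfolding \<alpha>_def using nb by (simp add: field_simps)
    moreover have "b < M0 + N0 + \<beta> * \<alpha>" using K0[OF zero_tailD a2] unfolding N0_def by simp
    ultimately show False using nb by linarith
  qed
  have anti: "a2 $ s' \<le> a2 $ s" if "s \<le> s'" for s s'
  proof (rule ccontr)
    assume "\<not> a2 $ s' \<le> a2 $ s"
    then have g: "0 < a2 $ s' - a2 $ s" by simp
    define t where "t = (\<bar>M0\<bar> + \<bar>N0\<bar> + 2 * \<bar>\<beta>\<bar> + \<bar>b\<bar> + 1) / (a2 $ s' - a2 $ s)"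
    have t0: "0 \<le> t" unfolding t_def using g by simp
    define e where "e x = (if x = s' then t else 0) - (if x = s then t else 0)" for x
    have "e \<in> tailD"
      unfolding tailD_def
    proof (intro CollectI allI)
      fix t0 :: 's
      have "(\<Sum>x\<in>{x. t0 \<le> x}. e x) =
        (\<Sum>x\<in>{x::'s. t0 \<le> x}. (if x = s' then t else 0)) - (\<Sum>x\<in>{x::'s. t0 \<le> x}. (if x = s then t else 0))"
        unfolding e_def by (rule sum_subtractf)
      also have "\<dots> = (if t0 \<le> s' then t else 0) - (if t0 \<le> s then t else 0)"
        by (subst (1 2) sum.delta) auto
      finally have "(\<Sum>x\<in>{x. t0 \<le> x}. e x) = (if t0 \<le> s' then t else 0) - (if t0 \<le> s then t else 0)" .
      then show "0 \<le> (\<Sum>x\<in>{x. t0 \<le> x}. e x)" using t0 that by auto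
    qed
    from K0[OF this order_refl]
    have "b < M0 + (\<Sum>x\<in>UNIV. a2 $ x * (q0 x - p' x - e x)) + \<beta> * 2" .
    moreover have "(\<Sum>x\<in>UNIV. a2 $ x * (q0 x - p' x - e x)) = N0 - t * (a2 $ s' - a2 $ s)"
    proof -
      have "(\<Sum>x\<in>UNIV. a2 $ x * (q0 x - p' x - e x)) = N0 - (\<Sum>x\<in>UNIV. a2 $ x * e x)"
        unfolding N0_def by (simp add: algebra_simps sum_subtractf sum.distrib)
      moreover have "(\<Sum>x\<in>UNIV. a2 $ x * e x) = t * (a2 $ s' - a2 $ s)"
      proof -
        have "(\<Sum>x\<in>UNIV. a2 $ x * e x) =
           (\<Sum>x\<in>UNIV. (if x = s' then a2 $ x * t else 0)) - (\<Sum>x\<in>UNIV. (if x = s then a2 $ x * t else 0))"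
          unfolding sum_subtractf[symmetric] e_def by (rule sum.cong) auto
        also have "\<dots> = t * (a2 $ s' - a2 $ s)" by (subst (1 2) sum.delta) (auto simp: algebra_simps)
        finally show ?thesis .
      qed
      ultimately show ?thesis by simp
    qed
    moreover have "t * (a2 $ s' - a2 $ s) = \<bar>M0\<bar> + \<bar>N0\<bar> + 2 * \<bar>\<beta>\<bar> + \<bar>b\<bar> + 1"
      unfolding t_def using g by simp
    ultimately show False by linarith
  qed
  define t where "t = (A + 1) / (b - \<beta> * A)"
  have t0: "0 < t" unfolding t_def using A0 bA by simp
  have tb: "t * (b - \<beta> * A) = A + 1" unfolding t_def using bA by simp
  have den: "0 < 1 + t * \<beta>" using t0 \<beta>0 by (simp add: add_pos_nonneg)
  define \<kappa> where "\<kappa> = t / (1 + t * \<beta>)"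
  have \<kappa>0: "0 < \<kappa>" unfolding \<kappa>_def using t0 den by simp
  define F where "F s = - \<kappa> * a1 $ s" for s
  define H where "H s = - \<kappa> * a2 $ s" for s
  define d where "d = t * b / (1 + t * \<beta>) - A"
  have "mono H" unfolding mono_def H_def using anti \<kappa>0 by simp
  moreover have "0 < d"
  proof -
    have "A * (1 + t * \<beta>) < t * b" using tb by (simp add: algebra_simps)
    then show ?thesis unfolding d_def using den by (simp add: field_simps)
  qed
  moreover have "A + d + (\<Sum>s\<in>UNIV. F s * (q s + q' s - p s - p' s)) + (\<Sum>s\<in>UNIV. H s * (q s - p' s)) \<le> x + y"
    if q: "q \<in> prob_simplex" "q' \<in> prob_simplex" "c q = ereal x" "c' q' = ereal y" for q q' x y
  proof -
    define M where "M = (\<Sum>s\<in>UNIV. a1 $ s * (q s + q' s - p s - p' s)) + (\<Sum>s\<in>UNIV. a2 $ s * (q s - p' s))"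
    have "b < M + \<beta> * (x + y)"
      using K[OF q(1,2) zero_tailD, of "x + y"] q(3,4) unfolding M_def by simp
    have "0 \<le> c q" "0 \<le> c' q'" using nn q by (auto simp: nonneg_cost_def)
    then have xy0: "0 \<le> x + y" using q(3,4) by simp
    have eqL: "A + d + (\<Sum>s\<in>UNIV. F s * (q s + q' s - p s - p' s)) + (\<Sum>s\<in>UNIV. H s * (q s - p' s))
        = (t * b - t * M) / (1 + t * \<beta>)"
    proof -
      have s1: "(\<Sum>s\<in>UNIV. F s * (q s + q' s - p s - p' s)) = - \<kappa> * (\<Sum>s\<in>UNIV. a1 $ s * (q s + q' s - p s - p' s))"
        unfolding F_def by (simp add: sum_distrib_left mult.assoc)
      have s2: "(\<Sum>s\<in>UNIV. H s * (q s - p' s)) = - \<kappa> * (\<Sum>s\<in>UNIV. a2 $ s * (q s - p' s))"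
        unfolding H_def by (simp add: sum_distrib_left mult.assoc)
      show ?thesis unfolding s1 s2 d_def \<kappa>_def M_def by (rule eqL_aux)
    qed
    have "t * b - t * M \<le> (1 + t * \<beta>) * (x + y)"
    proof -
      have "t * (b - M) \<le> t * (\<beta> * (x + y))" using \<open>b < M + \<beta> * (x + y)\<close> t0 by (intro mult_left_mono) auto
      then show ?thesis using xy0 by (simp add: algebra_simps)
    qed
    then show ?thesis unfolding eqL using den by (simp add: divide_le_eq mult.commute)
  qed
  ultimately show ?thesis using that by blast
qed

theorem lemma2:
  fixes c c' :: "('s::{finite,linorder} \<Rightarrow> real) \<Rightarrow> ereal"
  assumes "nonneg_cost c" "grounded c" "convex_cost c" "lsc_cost c"
      and "nonneg_cost c'" "grounded c'" "convex_cost c'" "lsc_cost c'"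
  shows "up_shifted c c' \<longleftrightarrow>
    (\<forall>f f' :: 's \<Rightarrow> real. mono (\<lambda>s. f s - f' s) \<longrightarrow>
       (val c' f \<ge> val c' f' \<longrightarrow> val c f \<ge> val c f') \<and>
       (val c' f > val c' f' \<longrightarrow> val c f > val c f'))"
proof
  assume up: "up_shifted c c'"
  show "\<forall>f f' :: 's \<Rightarrow> real. mono (\<lambda>s. f s - f' s) \<longrightarrow>
       (val c' f \<ge> val c' f' \<longrightarrow> val c f \<ge> val c f') \<and>
       (val c' f > val c' f' \<longrightarrow> val c f > val c f')"
  proof (intro allI impI)
    fix f f' :: "'s \<Rightarrow> real" assume m: "mono (\<lambda>s. f s - f' s)"
    obtain v1 where v1: "val c f = ereal v1" using val_real[OF assms(1,2)] by blast
    obtain v2 where v2: "val c f' = ereal v2" using val_real[OF assms(1,2)] by blast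
    obtain w1 where w1: "val c' f = ereal w1" using val_real[OF assms(5,6)] by blast
    obtain w2 where w2: "val c' f' = ereal w2" using val_real[OF assms(5,6)] by blast
    have sm: "v2 + w1 \<le> v1 + w2" by (rule supermod[OF up assms(1,5) v1 v2 w1 w2 m])
    show "(val c' f \<ge> val c' f' \<longrightarrow> val c f \<ge> val c f') \<and>
       (val c' f > val c' f' \<longrightarrow> val c f > val c f')"
      using sm v1 v2 w1 w2 by auto
  qed
next
  assume B0: "\<forall>f f' :: 's \<Rightarrow> real. mono (\<lambda>s. f s - f' s) \<longrightarrow>
       (val c' f \<ge> val c' f' \<longrightarrow> val c f \<ge> val c f') \<and>
       (val c' f > val c' f' \<longrightarrow> val c f > val c f')"
  then have B: "\<forall>f f' :: 's \<Rightarrow> real. mono (\<lambda>s. f s - f' s) \<longrightarrow>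
       (val c' f \<ge> val c' f' \<longrightarrow> val c f \<ge> val c f')" by blast
  show "up_shifted c c'" unfolding up_shifted_def
  proof (intro ballI)
    fix p p' :: "'s \<Rightarrow> real" assume p: "p \<in> prob_simplex" and p': "p' \<in> prob_simplex"
    show "\<exists>q\<in>prob_simplex. \<exists>q'\<in>prob_simplex. fosd p q' \<and> fosd q p' \<and>
     (\<lambda>s. (1/2) * p s + (1/2) * p' s) = (\<lambda>s. (1/2) * q s + (1/2) * q' s) \<and>
     c q + c' q' \<le> c p + c' p'"
    proof (cases "c p + c' p' = \<infinity>")
      case True
      have "fosd p p" "fosd p' p'" by (auto simp: fosd_def)
      moreover have "(\<lambda>s. (1/2) * p s + (1/2) * p' s) = (\<lambda>s. (1/2) * p' s + (1/2) * p s)" by auto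
      moreover have "c p' + c' p \<le> c p + c' p'" unfolding True by simp
      ultimately have "fosd p p \<and> fosd p' p' \<and> (\<lambda>s. (1/2) * p s + (1/2) * p' s) = (\<lambda>s. (1/2) * p' s + (1/2) * p s)
          \<and> c p' + c' p \<le> c p + c' p'" by blast
      then show ?thesis using p p' by blast
    next
      case False
      have "0 \<le> c p" "0 \<le> c' p'" using assms(1,5) p p' by (auto simp: nonneg_cost_def)
      then obtain A where A: "c p + c' p' = ereal A" using False
        by (cases "c p"; cases "c' p'") auto
      show ?thesis
      proof (rule ccontr)
        assume nex: "\<not> ?thesis"
        have nf: False if q: "q \<in> prob_simplex" "q' \<in> prob_simplex" "\<forall>s. q s + q' s = p s + p' s"
          "(\<lambda>s. q s - p' s) \<in> tailD" "c q + c' q' \<le> ereal A" for q q'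
        proof -
          have tq: "(\<Sum>s\<in>{s. s \<ge> t}. p' s) \<le> (\<Sum>s\<in>{s. s \<ge> t}. q s)" for t
          proof -
            have "0 \<le> (\<Sum>s\<in>{s. t \<le> s}. q s - p' s)" using q(4) unfolding tailD_def by blast
            then show ?thesis by (simp add: sum_subtractf)
          qed
          have f1: "fosd q p'" unfolding fosd_def using tq by blast
          have f2: "fosd p q'" unfolding fosd_def
          proof
            fix t :: 's
            have "(\<Sum>s\<in>{s. s \<ge> t}. q' s) = (\<Sum>s\<in>{s. s \<ge> t}. p s + p' s - q s)"
              using q(3) by (intro sum.cong) (auto simp: algebra_simps)
            also have "\<dots> = (\<Sum>s\<in>{s. s \<ge> t}. p s) + (\<Sum>s\<in>{s. s \<ge> t}. p' s) - (\<Sum>s\<in>{s. s \<ge> t}. q s)"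
              by (simp add: sum_subtractf sum.distrib)
            finally show "(\<Sum>s\<in>{s. s \<ge> t}. q' s) \<le> (\<Sum>s\<in>{s. s \<ge> t}. p s)" using tq[of t] by linarith
          qed
          have avg: "(\<lambda>s. (1/2) * p s + (1/2) * p' s) = (\<lambda>s. (1/2) * q s + (1/2) * q' s)"
          proof
            fix s show "(1/2) * p s + (1/2) * p' s = (1/2) * q s + (1/2) * q' s" using q(3)[rule_format, of s] by simp
          qed
          have "c q + c' q' \<le> c p + c' p'" using q(5) A by simp
          then show False using nex q(1,2) f1 f2 avg by blast
        qed
        obtain F H d where FH: "mono H" "0 < d"
          "\<And>q q' x y. q \<in> prob_simplex \<Longrightarrow> q' \<in> prob_simplex \<Longrightarrow> c q = ereal x \<Longrightarrow> c' q' = ereal y \<Longrightarrow>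
             A + d + (\<Sum>s\<in>UNIV. F s * (q s + q' s - p s - p' s)) + (\<Sum>s\<in>UNIV. H s * (q s - p' s)) \<le> x + y"
          apply (rule sep_step[OF assms(1,5,2,6,3,7,4,8) A p p'])
           apply (rule nf; assumption)
          apply blast
          done
        show False
          by (rule contra_step[OF assms(1,5,2,6) B p p' A FH(1,2) FH(3)])
      qed
    qed
  qed
qed

end
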